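(* For each $n\ge 2$, the monoids $\mathrm{Cat}_n$, $\mathrm{Styl}_n$, and $\mathrm{Kis}_n$ satisfy the same monoid identities.
   Context: A monoid identity is a formal equality $w=w'$ of words $w,w'$ in the free monoid $X^*$ over an alphabet $X$; it holds in a monoid $M$ if $w\varphi=w'\varphi$ for every homomorphism $\varphi\colon X^*\to M$. The stylic monoid $\mathrm{Styl}_n$ is generated by $a_1,\dots,a_n$ subject to: $a_i^2=a_i$ ($1\le i\le n$); $a_ja_ia_k=a_ja_ka_i$ and $a_ia_ka_j=a_ka_ia_j$ for $1\le i<j<k\le n$; $a_ja_ia_i=a_ia_ja_i$ and $a_ja_ja_i=a_ja_ia_j$ for $1\le i<j\le n$. The Kiselman monoid $\mathrm{Kis}_n$ is generated by $a_1,\dots,a_n$ subject to: $a_i^2=a_i$ ($1\le i\le n$); $a_ia_ja_i=a_ja_ia_j=a_ja_i$ for $1\le i<j\le n$. The Catalan monoid $\mathrm{Cat}_n$ is generated by $a_1,\dots,a_n$ subject to: $a_i^2=a_i$ ($1\le i\le n$); $a_ia_k=a_ka_i$ if $|i-k|\ge2$; $a_ia_{i+1}a_i=a_{i+1}a_ia_{i+1}=a_{i+1}a_i$ for $1\le i\le n-1$. *)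

theory Defs
  imports Main
begin

text \<open>Monoids given by presentations: words over the generators a_1..a_n are
  lists of naturals in {1..n}; the monoid is the quotient of the free monoid by the
  congruence generated by the defining relations R.\<close>

inductive pres_eq :: "(nat list \<times> nat list) set \<Rightarrow> nat list \<Rightarrow> nat list \<Rightarrow> bool"
  for R where
  refl: "pres_eq R u u"
| rel: "(l, r) \<in> R \<Longrightarrow> pres_eq R (p @ l @ q) (p @ r @ q)"
| sym: "pres_eq R u v \<Longrightarrow> pres_eq R v u"
| trans: "pres_eq R u v \<Longrightarrow> pres_eq R v w \<Longrightarrow> pres_eq R u w"

definition styl_rel :: "nat \<Rightarrow> (nat list \<times> nat list) set" where
  "styl_rel n =
     {([i, i], [i]) | i. 1 \<le> i \<and> i \<le> n}
   \<union> {([j, i, k], [j, k, i]) | i j k. 1 \<le> i \<and> i < j \<and> j < k \<and> k \<le> n}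
   \<union> {([i, k, j], [k, i, j]) | i j k. 1 \<le> i \<and> i < j \<and> j < k \<and> k \<le> n}
   \<union> {([j, i, i], [i, j, i]) | i j. 1 \<le> i \<and> i < j \<and> j \<le> n}
   \<union> {([j, j, i], [j, i, j]) | i j. 1 \<le> i \<and> i < j \<and> j \<le> n}"

definition kis_rel :: "nat \<Rightarrow> (nat list \<times> nat list) set" where
  "kis_rel n =
     {([i, i], [i]) | i. 1 \<le> i \<and> i \<le> n}
   \<union> {([i, j, i], [j, i]) | i j. 1 \<le> i \<and> i < j \<and> j \<le> n}
   \<union> {([j, i, j], [j, i]) | i j. 1 \<le> i \<and> i < j \<and> j \<le> n}"

definition cat_rel :: "nat \<Rightarrow> (nat list \<times> nat list) set" where
  "cat_rel n =
     {([i, i], [i]) | i. 1 \<le> i \<and> i \<le> n}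
   \<union> {([i, k], [k, i]) | i k. 1 \<le> i \<and> i \<le> n \<and> 1 \<le> k \<and> k \<le> n
                              \<and> (i + 2 \<le> k \<or> k + 2 \<le> i)}
   \<union> {([i, i + 1, i], [i + 1, i]) | i. 1 \<le> i \<and> i \<le> n - 1}
   \<union> {([i + 1, i, i + 1], [i + 1, i]) | i. 1 \<le> i \<and> i \<le> n - 1}"

definition identity_holds ::
  "(nat list \<times> nat list) set \<Rightarrow> nat \<Rightarrow> 'x list \<Rightarrow> 'x list \<Rightarrow> bool" where
  "identity_holds R n w w' \<longleftrightarrow>
     (\<forall>\<sigma> :: 'x \<Rightarrow> nat list. (\<forall>x. set (\<sigma> x) \<subseteq> {1..n}) \<longrightarrow>
        pres_eq R (concat (map \<sigma> w)) (concat (map \<sigma> w')))"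

end

theory Submission
  imports Defs "HOL-Library.Sublist"
begin

lemma pres_eq_app: "pres_eq R u v \<Longrightarrow> pres_eq R (p @ u @ q) (p @ v @ q)"
proof (induction arbitrary: p q rule: pres_eq.induct)
  case (refl u) then show ?case by (rule pres_eq.refl)
next
  case (rel l r p' q')
  have "pres_eq R ((p @ p') @ l @ (q' @ q)) ((p @ p') @ r @ (q' @ q))"
    using rel by (rule pres_eq.rel)
  then show ?case by simp
next
  case (sym u v) then show ?case by (blast intro: pres_eq.sym)
next
  case (trans u v w) then show ?case by (blast intro: pres_eq.trans)
qed

lemma pres_eq_rel1: "(l, r) \<in> R \<Longrightarrow> pres_eq R l r"
  using pres_eq.rel[of l r R "[]" "[]"] by simp

lemma pres_eq_mono:
  assumes "\<And>l r. (l, r) \<in> R1 \<Longrightarrow> pres_eq R2 l r"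
  shows "pres_eq R1 u v \<Longrightarrow> pres_eq R2 u v"
proof (induction rule: pres_eq.induct)
  case (refl u) then show ?case by (rule pres_eq.refl)
next
  case (rel l r p q) then show ?case using assms pres_eq_app by blast
next
  case (sym u v) then show ?case by (blast intro: pres_eq.sym)
next
  case (trans u v w) then show ?case by (blast intro: pres_eq.trans)
qed

lemma identity_holds_mono:
  assumes "\<And>l r. (l, r) \<in> R1 \<Longrightarrow> pres_eq R2 l r"
  shows "identity_holds R1 n w w' \<Longrightarrow> identity_holds R2 n w w'"
  unfolding identity_holds_def using pres_eq_mono[OF assms] by blast

lemma pe_tr: "pres_eq R u v \<Longrightarrow> pres_eq R v w \<Longrightarrow> pres_eq R u w" by (rule pres_eq.trans)
lemma pe_sym: "pres_eq R u v \<Longrightarrow> pres_eq R v u" by (rule pres_eq.sym)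

lemma kis_styl: "(l, r) \<in> kis_rel n \<Longrightarrow> pres_eq (styl_rel n) l r"
proof -
  assume "(l, r) \<in> kis_rel n"
  then consider (a) i where "l = [i,i]" "r = [i]" "1 \<le> i" "i \<le> n"
    | (b) i j where "l = [i,j,i]" "r = [j,i]" "1 \<le> i" "i < j" "j \<le> n"
    | (c) i j where "l = [j,i,j]" "r = [j,i]" "1 \<le> i" "i < j" "j \<le> n"
    unfolding kis_rel_def by blast
  then show ?thesis
  proof cases
    case a then show ?thesis by (intro pres_eq_rel1) (auto simp: styl_rel_def)
  next
    case b
    have 1: "pres_eq (styl_rel n) [j,i,i] [i,j,i]" using b by (intro pres_eq_rel1) (auto simp: styl_rel_def)
    have 2: "pres_eq (styl_rel n) [i,i] [i]" using b by (intro pres_eq_rel1) (auto simp: styl_rel_def)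
    have 3: "pres_eq (styl_rel n) [j,i,i] [j,i]" using pres_eq_app[OF 2, of "[j]" "[]"] by simp
    show ?thesis using b pe_tr[OF pe_sym[OF 1] 3] by simp
  next
    case c
    have 1: "pres_eq (styl_rel n) [j,j,i] [j,i,j]" using c by (intro pres_eq_rel1) (auto simp: styl_rel_def)
    have 2: "pres_eq (styl_rel n) [j,j] [j]" using c by (intro pres_eq_rel1) (auto simp: styl_rel_def)
    have 3: "pres_eq (styl_rel n) [j,j,i] [j,i]" using pres_eq_app[OF 2, of "[]" "[i]"] by simp
    show ?thesis using c pe_tr[OF pe_sym[OF 1] 3] by simp
  qed
qed

lemma cat_comm: "1 \<le> i \<Longrightarrow> i \<le> n \<Longrightarrow> 1 \<le> k \<Longrightarrow> k \<le> n \<Longrightarrow> i + 2 \<le> k \<or> k + 2 \<le> i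
   \<Longrightarrow> pres_eq (cat_rel n) [i,k] [k,i]"
  by (intro pres_eq_rel1) (auto simp: cat_rel_def)

lemma cat_idem: "1 \<le> i \<Longrightarrow> i \<le> n \<Longrightarrow> pres_eq (cat_rel n) [i,i] [i]"
  by (intro pres_eq_rel1) (auto simp: cat_rel_def)

lemma cat_A: "1 \<le> i \<Longrightarrow> i < j \<Longrightarrow> j \<le> n \<Longrightarrow> pres_eq (cat_rel n) [i,j,i] [j,i]"
proof -
  assume h: "1 \<le> i" "i < j" "j \<le> n"
  show ?thesis
  proof (cases "j = i + 1")
    case True then show ?thesis using h by (intro pres_eq_rel1) (auto simp: cat_rel_def)
  next
    case False
    have 1: "pres_eq (cat_rel n) [i,j,i] [j,i,i]"
      using pres_eq_app[OF cat_comm[of i n j], of "[]" "[i]"] h False by simp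
    have 2: "pres_eq (cat_rel n) [j,i,i] [j,i]"
      using pres_eq_app[OF cat_idem[of i n], of "[j]" "[]"] h by simp
    show ?thesis using pe_tr[OF 1 2] by simp
  qed
qed

lemma cat_B: "1 \<le> i \<Longrightarrow> i < j \<Longrightarrow> j \<le> n \<Longrightarrow> pres_eq (cat_rel n) [j,i,j] [j,i]"
proof -
  assume h: "1 \<le> i" "i < j" "j \<le> n"
  show ?thesis
  proof (cases "j = i + 1")
    case True then show ?thesis using h by (intro pres_eq_rel1) (auto simp: cat_rel_def)
  next
    case False
    have 1: "pres_eq (cat_rel n) [j,i,j] [j,j,i]"
      using pres_eq_app[OF cat_comm[of i n j], of "[j]" "[]"] h False by simp
    have 2: "pres_eq (cat_rel n) [j,j,i] [j,i]"
      using pres_eq_app[OF cat_idem[of j n], of "[]" "[i]"] h by simp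
    show ?thesis using pe_tr[OF 1 2] by simp
  qed
qed

lemma styl_cat: "(l, r) \<in> styl_rel n \<Longrightarrow> pres_eq (cat_rel n) l r"
proof -
  assume "(l, r) \<in> styl_rel n"
  then consider (a) i where "l = [i,i]" "r = [i]" "1 \<le> i" "i \<le> n"
    | (b) i j k where "l = [j,i,k]" "r = [j,k,i]" "1 \<le> i" "i < j" "j < k" "k \<le> n"
    | (c) i j k where "l = [i,k,j]" "r = [k,i,j]" "1 \<le> i" "i < j" "j < k" "k \<le> n"
    | (d) i j where "l = [j,i,i]" "r = [i,j,i]" "1 \<le> i" "i < j" "j \<le> n"
    | (e) i j where "l = [j,j,i]" "r = [j,i,j]" "1 \<le> i" "i < j" "j \<le> n"
    unfolding styl_rel_def by blast
  then show ?thesis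
  proof cases
    case a then show ?thesis using cat_idem by simp
  next
    case b
    show ?thesis using pres_eq_app[OF cat_comm[of i n k], of "[j]" "[]"] b by simp
  next
    case c
    show ?thesis using pres_eq_app[OF cat_comm[of i n k], of "[]" "[j]"] c by simp
  next
    case d
    have 1: "pres_eq (cat_rel n) [j,i,i] [j,i]"
      using pres_eq_app[OF cat_idem[of i n], of "[j]" "[]"] d by simp
    show ?thesis using d pe_tr[OF 1 pe_sym[OF cat_A]] by simp
  next
    case e
    have 1: "pres_eq (cat_rel n) [j,j,i] [j,i]"
      using pres_eq_app[OF cat_idem[of j n], of "[]" "[i]"] e by simp
    show ?thesis using e pe_tr[OF 1 pe_sym[OF cat_B]] by simp
  qed
qed

definition act :: "nat \<Rightarrow> nat \<Rightarrow> nat" where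
  "act i p = (if p = Suc i then i else p)"

fun ev :: "nat list \<Rightarrow> nat \<Rightarrow> nat" where
  "ev [] p = p"
| "ev (i # w) p = ev w (act i p)"

lemma ev_append: "ev (u @ v) p = ev v (ev u p)"
  by (induction u arbitrary: p) auto

lemma ev_rel: "(l, r) \<in> cat_rel n \<Longrightarrow> ev l = ev r"
proof -
  assume "(l, r) \<in> cat_rel n"
  then consider (a) i where "l = [i,i]" "r = [i]"
    | (b) i k where "l = [i,k]" "r = [k,i]" "i + 2 \<le> k \<or> k + 2 \<le> i"
    | (c) i where "l = [i, i+1, i]" "r = [i+1, i]"
    | (d) i where "l = [i+1, i, i+1]" "r = [i+1, i]"
    unfolding cat_rel_def by blast
  then show ?thesis
  proof cases
    case a then show ?thesis by (simp add: fun_eq_iff act_def)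
  next
    case b then show ?thesis by (auto simp: fun_eq_iff act_def)
  next
    case c then show ?thesis by (simp add: fun_eq_iff act_def)
  next
    case d then show ?thesis by (simp add: fun_eq_iff act_def)
  qed
qed

lemma ev_pres: "pres_eq (cat_rel n) x y \<Longrightarrow> ev x = ev y"
proof (induction rule: pres_eq.induct)
  case (rel l r p q)
  then show ?case using ev_rel[OF rel] by (auto simp: fun_eq_iff ev_append)
qed auto

lemma ev_fix: "\<forall>x\<in>set L. q \<le> x \<Longrightarrow> ev L q = q"
  by (induction L) (auto simp: act_def)

lemma ev_sorted: "sorted_wrt (<) L \<Longrightarrow> ev L (Suc p) = (if p \<in> set L then p else Suc p)"
proof (induction L)
  case Nil then show ?case by simp
next
  case (Cons l L)
  show ?case
  proof (cases "p = l")
    case True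
    have "ev L l = l" using Cons.prems by (intro ev_fix) auto
    then show ?thesis using True by (simp add: act_def)
  next
    case False
    then show ?thesis using Cons by (auto simp: act_def)
  qed
qed

fun gm :: "'x list \<Rightarrow> nat \<Rightarrow> 'x list \<Rightarrow> nat" where
  "gm s j [] = j"
| "gm s j (x # u) = gm s (if j < length s \<and> s ! j = x then Suc j else j) u"

lemma gm_le: "j \<le> length s \<Longrightarrow> gm s j u \<le> length s"
  by (induction u arbitrary: j) auto

lemma gm_full: "gm s (length s) u = length s"
  by (induction u) auto

lemma gm_subseq: "j \<le> length s \<Longrightarrow> (gm s j u = length s \<longleftrightarrow> subseq (drop j s) u)"
proof (induction u arbitrary: j)
  case Nil then show ?case by (auto dest!: list_emb_Nil2)
next
  case (Cons x u)
  show ?case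
  proof (cases "j < length s")
    case True
    then have d: "drop j s = s ! j # drop (Suc j) s" by (simp add: Cons_nth_drop_Suc)
    show ?thesis
    proof (cases "s ! j = x")
      case True
      then show ?thesis using Cons.IH[of "Suc j"] \<open>j < length s\<close> d by simp
    next
      case False
      then show ?thesis using Cons.IH[of j] \<open>j < length s\<close> d by simp
    qed
  next
    case False
    then have "j = length s" using Cons.prems by simp
    then show ?thesis using gm_full by simp
  qed
qed

definition sig :: "nat \<Rightarrow> 'x list \<Rightarrow> 'x \<Rightarrow> nat list" where
  "sig n s x = sorted_list_of_set {n - j | j. j < length s \<and> s ! j = x}"

lemma set_sig: "set (sig n s x) = {n - j | j. j < length s \<and> s ! j = x}"
  unfolding sig_def by (subst set_sorted_list_of_set) auto

lemma sig_sorted: "sorted_wrt (<) (sig n s x)"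
  unfolding sig_def by simp

lemma sig_range: "length s \<le> n \<Longrightarrow> set (sig n s x) \<subseteq> {1..n}"
  unfolding set_sig by auto

lemma gm_eval: "j \<le> length s \<Longrightarrow> length s \<le> n \<Longrightarrow>
   ev (concat (map (sig n s) u)) (Suc n - j) = Suc n - gm s j u"
proof (induction u arbitrary: j)
  case Nil then show ?case by simp
next
  case (Cons x u)
  have e: "Suc n - j = Suc (n - j)" using Cons.prems by simp
  have mem: "(n - j \<in> set (sig n s x)) \<longleftrightarrow> (j < length s \<and> s ! j = x)"
  proof
    assume "n - j \<in> set (sig n s x)"
    then obtain j' where "n - j = n - j'" "j' < length s" "s ! j' = x" unfolding set_sig by blast
    moreover then have "j' = j" using Cons.prems by simp
    ultimately show "j < length s \<and> s ! j = x" by simp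
  qed (auto simp: set_sig)
  have step: "ev (sig n s x) (Suc n - j) = Suc n - (if j < length s \<and> s ! j = x then Suc j else j)"
    unfolding e ev_sorted[OF sig_sorted] mem using Cons.prems by auto
  show ?case
    using Cons.IH[of "if j < length s \<and> s ! j = x then Suc j else j"] Cons.prems step
    by (auto simp: ev_append split: if_splits)
qed

lemma cat_detect:
  assumes "identity_holds (cat_rel n) n w w'" and "length s \<le> n"
  shows "subseq s w \<longleftrightarrow> subseq s w'"
proof -
  have r: "\<forall>x. set (sig n s x) \<subseteq> {1..n}" using sig_range[OF assms(2)] by blast
  have "pres_eq (cat_rel n) (concat (map (sig n s) w)) (concat (map (sig n s) w'))"
    using assms(1)[unfolded identity_holds_def, rule_format, OF r[rule_format]] .
  then have "ev (concat (map (sig n s) w)) (Suc n - 0) = ev (concat (map (sig n s) w')) (Suc n - 0)"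
    using ev_pres by metis
  then have "Suc n - gm s 0 w = Suc n - gm s 0 w'" using gm_eval[of 0 s n] assms(2) by simp
  moreover have "gm s 0 w \<le> length s" "gm s 0 w' \<le> length s" using gm_le by auto
  ultimately have "gm s 0 w = gm s 0 w'" using assms(2) by simp
  then show ?thesis using gm_subseq[of 0 s w] gm_subseq[of 0 s w'] by simp
qed

lemma subseq_cm: "subseq v u \<Longrightarrow> subseq (concat (map f v)) (concat (map f u))"
proof (induction rule: list_emb.induct)
  case (list_emb_Nil ys) then show ?case by simp
next
  case (list_emb_Cons xs ys y) then show ?case by (simp add: list_emb_append2)
next
  case (list_emb_Cons2 x y xs ys) then show ?case by (simp add: list_emb_append_mono)
qed

lemma subseq_cm_back: "subseq t (concat (map f u)) \<Longrightarrow>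
   \<exists>v. subseq v u \<and> length v \<le> length t \<and> subseq t (concat (map f v))"
proof (induction u arbitrary: t)
  case Nil then show ?case by (auto dest!: list_emb_Nil2 intro: exI[of _ "[]"])
next
  case (Cons x u)
  from Cons.prems obtain t1 t2 where t: "t = t1 @ t2" "subseq t1 (f x)" "subseq t2 (concat (map f u))"
    by (auto elim: subseq_appendE)
  from Cons.IH[OF t(3)] obtain v where v: "subseq v u" "length v \<le> length t2" "subseq t2 (concat (map f v))"
    by blast
  show ?case
  proof (cases "t1 = []")
    case True
    then show ?thesis using v t by (intro exI[of _ v]) auto
  next
    case False
    then have "length (x # v) \<le> length t" using t v by (cases t1) auto
    moreover have "subseq t (concat (map f (x # v)))" using t v by (simp add: list_emb_append_mono)
    ultimately show ?thesis using v by (intro exI[of _ "x # v"]) auto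
  qed
qed

lemma subst_sim:
  assumes "\<And>s. length s \<le> n \<Longrightarrow> subseq s w \<Longrightarrow> subseq s w'"
    and "length t \<le> n" and "subseq t (concat (map f w))"
  shows "subseq t (concat (map f w'))"
proof -
  obtain v where v: "subseq v w" "length v \<le> length t" "subseq t (concat (map f v))"
    using subseq_cm_back[OF assms(3)] by blast
  have "subseq v w'" using assms(1)[OF _ v(1)] v(2) assms(2) by simp
  then have "subseq (concat (map f v)) (concat (map f w'))" by (rule subseq_cm)
  then show ?thesis using v(3) by (metis subseq_order.trans)
qed

definition Dset :: "nat list \<Rightarrow> nat list set" where
  "Dset w = {s. sorted_wrt (>) s \<and> subseq s w}"

definition stepD :: "nat list set \<Rightarrow> nat \<Rightarrow> nat list set" where
  "stepD S a = S \<union> {s @ [a] | s. s \<in> S \<and> (\<forall>x\<in>set s. a < x)}"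

lemma subseq_snoc_iff: "subseq s (w @ [a]) \<longleftrightarrow> subseq s w \<or> (\<exists>s'. s = s' @ [a] \<and> subseq s' w)"
proof
  assume "subseq s (w @ [a])"
  then obtain s1 s2 where "s = s1 @ s2" "subseq s1 w" "subseq s2 [a]" by (auto elim: subseq_appendE)
  moreover have "s2 = [] \<or> s2 = [a]" using \<open>subseq s2 [a]\<close>
    by (cases s2) (auto split: if_splits dest: list_emb_Nil2)
  ultimately show "subseq s w \<or> (\<exists>s'. s = s' @ [a] \<and> subseq s' w)" by auto
next
  assume "subseq s w \<or> (\<exists>s'. s = s' @ [a] \<and> subseq s' w)"
  then show "subseq s (w @ [a])"
    by (auto intro: list_emb_prefix list_emb_append_mono)
qed

lemma Dset_snoc: "Dset (w @ [a]) = stepD (Dset w) a"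
  unfolding Dset_def stepD_def subseq_snoc_iff by (auto simp: sorted_wrt_append)

lemma Dset_app: "Dset (w @ l) = foldl stepD (Dset w) l"
proof (induction l rule: rev_induct)
  case Nil then show ?case by simp
next
  case (snoc a l)
  have "Dset (w @ l @ [a]) = stepD (Dset (w @ l)) a" using Dset_snoc[of "w @ l" a] by simp
  then show ?case using snoc by simp
qed

lemma step_idem: "stepD (stepD S i) i = stepD S i"
  unfolding stepD_def by auto

lemma step_A: "i < j \<Longrightarrow> stepD (stepD (stepD S i) j) i = stepD (stepD S j) i"
  unfolding stepD_def by (auto; fastforce)

lemma step_B: "i < j \<Longrightarrow> stepD (stepD (stepD S j) i) j = stepD (stepD S j) i"
  unfolding stepD_def by (auto; fastforce)

lemma fold_rel: "(l, r) \<in> kis_rel n \<Longrightarrow> foldl stepD S l = foldl stepD S r"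
  unfolding kis_rel_def using step_idem step_A step_B by auto

lemma Dset_pres: "pres_eq (kis_rel n) x y \<Longrightarrow> Dset x = Dset y"
proof (induction rule: pres_eq.induct)
  case (rel l r p q)
  have "Dset (p @ l @ q) = foldl stepD (foldl stepD (Dset p) l) q"
    using Dset_app[of p "l @ q"] by simp
  moreover have "Dset (p @ r @ q) = foldl stepD (foldl stepD (Dset p) r) q"
    using Dset_app[of p "r @ q"] by simp
  ultimately show ?case using fold_rel[OF rel] by simp
qed auto

lemma kis_rel_idem: "1 \<le> i \<Longrightarrow> i \<le> n \<Longrightarrow> pres_eq (kis_rel n) [i,i] [i]"
  by (intro pres_eq_rel1) (auto simp: kis_rel_def)
lemma kis_rel_A: "1 \<le> i \<Longrightarrow> i < j \<Longrightarrow> j \<le> n \<Longrightarrow> pres_eq (kis_rel n) [i,j,i] [j,i]"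
  by (intro pres_eq_rel1) (auto simp: kis_rel_def)
lemma kis_rel_B: "1 \<le> i \<Longrightarrow> i < j \<Longrightarrow> j \<le> n \<Longrightarrow> pres_eq (kis_rel n) [j,i,j] [j,i]"
  by (intro pres_eq_rel1) (auto simp: kis_rel_def)

lemma kis_down:
  assumes "\<forall>x\<in>set v. 1 \<le> x \<and> x < i" "1 \<le> i" "i \<le> n"
  shows "pres_eq (kis_rel n) (i # v @ [i]) (i # v)"
  using assms(1)
proof (induction v rule: rev_induct)
  case Nil then show ?case using kis_rel_idem assms by simp
next
  case (snoc b v)
  then have IH: "pres_eq (kis_rel n) (i # v @ [i]) (i # v)" and b: "1 \<le> b" "b < i" by auto
  have 1: "pres_eq (kis_rel n) ((i # v) @ [b, i]) ((i # v @ [i]) @ [b, i])"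
    using pres_eq_app[OF pe_sym[OF IH], of "[]" "[b,i]"] by simp
  have 2: "pres_eq (kis_rel n) ((i # v) @ [i, b, i]) ((i # v) @ [i, b])"
    using pres_eq_app[OF kis_rel_B[of b i n], of "i # v" "[]"] b assms by simp
  have 3: "pres_eq (kis_rel n) ((i # v @ [i]) @ [b]) ((i # v) @ [b])"
    using pres_eq_app[OF IH, of "[]" "[b]"] by simp
  have "pres_eq (kis_rel n) ((i # v) @ [b, i]) ((i # v) @ [b])"
    using pe_tr[OF pe_tr[OF 1 _] 3] 2 by simp
  then show ?case by simp
qed

lemma kis_up:
  assumes "\<forall>x\<in>set v. i < x \<and> x \<le> n" "1 \<le> i" "i \<le> n"
  shows "pres_eq (kis_rel n) (i # v @ [i]) (v @ [i])"
  using assms(1)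
proof (induction v)
  case Nil then show ?case using kis_rel_idem assms by simp
next
  case (Cons b v)
  then have IH: "pres_eq (kis_rel n) (i # v @ [i]) (v @ [i])" and b: "i < b" "b \<le> n" by auto
  have 1: "pres_eq (kis_rel n) ([i, b] @ v @ [i]) ([i, b] @ (i # v @ [i]))"
    using pres_eq_app[OF pe_sym[OF IH], of "[i,b]" "[]"] by simp
  have 2: "pres_eq (kis_rel n) ([i, b, i] @ v @ [i]) ([b, i] @ v @ [i])"
    using pres_eq_app[OF kis_rel_A[of i b n], of "[]" "v @ [i]"] b assms by simp
  have 3: "pres_eq (kis_rel n) ([b] @ (i # v @ [i])) ([b] @ v @ [i])"
    using pres_eq_app[OF IH, of "[b]" "[]"] by simp
  show ?case using pe_tr[OF pe_tr[OF 1 _] 3] 2 by simp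
qed

definition reduced :: "nat list \<Rightarrow> bool" where
  "reduced w \<longleftrightarrow> (\<forall>a i v z. w = a @ i # v @ i # z \<and> i \<notin> set v \<longrightarrow>
      (\<exists>x\<in>set v. x < i) \<and> (\<exists>x\<in>set v. i < x))"

lemma reduced_tl: "reduced (c # u) \<Longrightarrow> reduced u"
  unfolding reduced_def by (metis append_Cons)

lemma normalize:
  "set w \<subseteq> {1..n} \<Longrightarrow> \<exists>r. reduced r \<and> pres_eq (kis_rel n) w r"
proof (induction "length w" arbitrary: w rule: less_induct)
  case less
  show ?case
  proof (cases "reduced w")
    case True then show ?thesis using pres_eq.refl by blast
  next
    case False
    then obtain a i v z where w: "w = a @ i # v @ i # z" and iv: "i \<notin> set v"
      and nr: "\<not> ((\<exists>x\<in>set v. x < i) \<and> (\<exists>x\<in>set v. i < x))"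
      unfolding reduced_def by blast
    have rng: "\<forall>x\<in>set w. 1 \<le> x \<and> x \<le> n" using less.prems by auto
    have i: "1 \<le> i" "i \<le> n" using rng w by auto
    from nr iv have "(\<forall>x\<in>set v. x < i) \<or> (\<forall>x\<in>set v. i < x)"
      by (metis linorder_neqE_nat)
    then obtain w' where e: "pres_eq (kis_rel n) w w'" and l: "length w' < length w"
      and s: "set w' \<subseteq> {1..n}"
    proof
      assume h: "\<forall>x\<in>set v. x < i"
      have "pres_eq (kis_rel n) (a @ (i # v @ [i]) @ z) (a @ (i # v) @ z)"
        using pres_eq_app[OF kis_down] h rng w i by auto
      then show ?thesis using w less.prems by (intro that[of "a @ (i # v) @ z"]) auto
    next
      assume h: "\<forall>x\<in>set v. i < x"
      have "pres_eq (kis_rel n) (a @ (i # v @ [i]) @ z) (a @ (v @ [i]) @ z)"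
        using pres_eq_app[OF kis_up] h rng w i by auto
      then show ?thesis using w less.prems by (intro that[of "a @ (v @ [i]) @ z"]) auto
    qed
    from less.hyps[OF l s] obtain r where "reduced r" "pres_eq (kis_rel n) w' r" by blast
    then show ?thesis using e pe_tr by blast
  qed
qed

lemma subseq_first: "e \<notin> set v \<Longrightarrow> subseq (e # r) (v @ e # z) \<Longrightarrow> subseq r z"
proof (induction v)
  case Nil then show ?case by (simp add: subseq_Cons')
next
  case (Cons y v) then show ?case by (auto split: if_splits)
qed

lemma kK:
  "reduced (pre @ e # post) \<Longrightarrow> \<exists>t. sorted_wrt (>) t \<and> (\<forall>x\<in>set t. x < e) \<and>
      subseq t post \<and> \<not> subseq (e # t) post"
proof (induction e arbitrary: pre post rule: less_induct)
  case (less e)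
  show ?case
  proof (cases "e \<in> set post")
    case False
    then show ?thesis by (intro exI[of _ "[]"]) (auto simp: subseq_singleton_left)
  next
    case True
    then obtain v z where p: "post = v @ e # z" and ev: "e \<notin> set v"
      using split_list_first by metis
    have "\<exists>x\<in>set v. x < e" using less.prems p ev unfolding reduced_def by blast
    then obtain d v1 v2 where d: "d < e" and v: "v = v1 @ d # v2" by (metis split_list)
    have "reduced ((pre @ e # v1) @ d # (v2 @ e # z))" using less.prems p v by simp
    from less.IH[OF d this] obtain t where t: "sorted_wrt (>) t" "\<forall>x\<in>set t. x < d"
      "subseq t (v2 @ e # z)" "\<not> subseq (d # t) (v2 @ e # z)" by blast
    have 1: "subseq (d # t) post" using t(3) p v by (simp add: subseq_drop_many)
    have 2: "\<not> subseq (e # d # t) post"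
    proof
      assume "subseq (e # d # t) post"
      then have "subseq (d # t) z" using subseq_first ev p by metis
      then have "subseq (d # t) ((v2 @ [e]) @ z)" by (rule subseq_drop_many)
      then show False using t(4) by simp
    qed
    show ?thesis using t d 1 2 by (intro exI[of _ "d # t"]) auto
  qed
qed

lemma Dset_Nil: "Dset [] = {[]}"
  unfolding Dset_def by (auto dest: list_emb_Nil2)

lemma single_Dset: "[c] \<in> Dset (c # u)"
  unfolding Dset_def by simp

lemma FL:
  assumes "reduced (c # u)" "c < b"
  shows "\<exists>s. s \<in> Dset (c # u) \<and> (\<forall>x\<in>set s. x < b) \<and> b # s \<notin> Dset (c # u)"
proof -
  obtain t where t: "sorted_wrt (>) t" "\<forall>x\<in>set t. x < c" "subseq t u" "\<not> subseq (c # t) u"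
    using kK[of "[]" c u] assms by auto
  have "c # t \<in> Dset (c # u)" using t unfolding Dset_def by auto
  moreover have "b # c # t \<notin> Dset (c # u)"
    using t(4) assms(2) unfolding Dset_def by (auto dest: subseq_Cons')
  ultimately show ?thesis using t assms(2) by (intro exI[of _ "c # t"]) auto
qed

lemma PL:
  assumes "s \<in> Dset (c # u)" "\<forall>x\<in>set s. x < c"
  shows "c # s \<in> Dset (c # u)"
proof (cases s)
  case Nil then show ?thesis by (simp add: single_Dset)
next
  case (Cons x s')
  then have "x \<noteq> c" using assms(2) by auto
  then show ?thesis using assms Cons unfolding Dset_def by auto
qed

lemma TC:
  assumes "reduced (c # u)"
  shows "t \<in> Dset u \<longleftrightarrow> t \<in> Dset (c # u) \<and> (t \<noteq> [] \<and> hd t = c \<longrightarrow> (\<exists>b>c. b # t \<in> Dset (c # u)))"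
proof
  assume h: "t \<in> Dset u"
  then have "t \<in> Dset (c # u)" unfolding Dset_def by auto
  moreover have "\<exists>b>c. b # t \<in> Dset (c # u)" if tc: "t \<noteq> []" "hd t = c"
  proof -
    obtain t'' where tt: "t = c # t''" using tc by (cases t) auto
    have st: "sorted_wrt (>) t" "subseq (c # t'') u" using h tt unfolding Dset_def by auto
    then have "c \<in> set u" using list_emb_ConsD[OF st(2)] by auto
    then obtain v z where u: "u = v @ c # z" and cv: "c \<notin> set v" using split_list_first by metis
    have "\<exists>x\<in>set v. c < x" using assms u cv unfolding reduced_def
      by (metis append_Nil append_Cons)
    then obtain b v1 v2 where b: "c < b" and v: "v = v1 @ b # v2" by (metis split_list)
    have "subseq t'' z" using subseq_first cv st u by metis
    then have "subseq (b # c # t'') (v1 @ b # v2 @ c # z)" by (simp add: subseq_drop_many)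
    then have "subseq (b # t) u" using u v tt by simp
    then have "subseq (b # t) (c # u)" by (rule list_emb_Cons)
    moreover have "sorted_wrt (>) (b # t)" using st tt b by auto
    ultimately show ?thesis using b unfolding Dset_def by auto
  qed
  ultimately show "t \<in> Dset (c # u) \<and> (t \<noteq> [] \<and> hd t = c \<longrightarrow> (\<exists>b>c. b # t \<in> Dset (c # u)))"
    by blast
next
  assume h: "t \<in> Dset (c # u) \<and> (t \<noteq> [] \<and> hd t = c \<longrightarrow> (\<exists>b>c. b # t \<in> Dset (c # u)))"
  show "t \<in> Dset u"
  proof (cases t)
    case Nil then show ?thesis unfolding Dset_def by simp
  next
    case (Cons x t'')
    show ?thesis
    proof (cases "x = c")
      case False then show ?thesis using h Cons unfolding Dset_def by auto
    next
      case True
      then obtain b where "b > c" "b # t \<in> Dset (c # u)" using h Cons by auto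
      then have "subseq (b # t) u" unfolding Dset_def by auto
      then show ?thesis using h unfolding Dset_def by (auto dest: subseq_Cons')
    qed
  qed
qed

lemma Dset_unique: "reduced w \<Longrightarrow> reduced w' \<Longrightarrow> Dset w = Dset w' \<Longrightarrow> w = w'"
proof (induction w arbitrary: w')
  case Nil
  then show ?case using single_Dset Dset_Nil by (cases w') auto
next
  case (Cons c u)
  then obtain c' u' where w': "w' = c' # u'" using single_Dset Dset_Nil by (cases w') force+
  have cc: "c = c'"
  proof (rule ccontr)
    assume "c \<noteq> c'"
    then consider "c < c'" | "c' < c" by linarith
    then show False
    proof cases
      case 1
      obtain s where s: "s \<in> Dset (c # u)" "\<forall>x\<in>set s. x < c'" "c' # s \<notin> Dset (c # u)"
        using FL[OF Cons.prems(1) 1] by blast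
      have "c' # s \<in> Dset (c' # u')" using PL s Cons.prems(3) w' by auto
      then show False using s Cons.prems(3) w' by simp
    next
      case 2
      obtain s where s: "s \<in> Dset (c' # u')" "\<forall>x\<in>set s. x < c" "c # s \<notin> Dset (c' # u')"
        using FL[OF _ 2] Cons.prems(2) w' by blast
      have "s \<in> Dset (c # u)" using s(1) Cons.prems(3) w' by simp
      from PL[OF this s(2)] have "c # s \<in> Dset (c # u)" .
      then show False using s Cons.prems(3) w' by simp
    qed
  qed
  have "Dset u = Dset u'"
    using TC[OF Cons.prems(1)] TC[of c' u'] Cons.prems(2,3) w' cc by auto
  then have "u = u'" using Cons.IH reduced_tl Cons.prems w' by blast
  then show ?case using w' cc by simp
qed

lemma sorted_gt_distinct: "sorted_wrt (>) (s :: nat list) \<Longrightarrow> distinct s"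
  by (induction s) auto

lemma kis_complete:
  assumes "set x \<subseteq> {1..n}" "set y \<subseteq> {1..n}"
    and "\<And>s. length s \<le> n \<Longrightarrow> subseq s x \<longleftrightarrow> subseq s y"
  shows "pres_eq (kis_rel n) x y"
proof -
  have len: "length s \<le> n" if "sorted_wrt (>) s" "set s \<subseteq> {1..n}" for s
  proof -
    have "length s = card (set s)" using sorted_gt_distinct[OF that(1)] by (simp add: distinct_card)
    also have "\<dots> \<le> card {1..n}" using that(2) by (intro card_mono) auto
    finally show ?thesis by simp
  qed
  have sub: "set s \<subseteq> set w" if "subseq s w" for s w :: "nat list"
    using that by (induction rule: list_emb.induct) auto
  have "Dset x = Dset y"
    unfolding Dset_def using assms len sub by (auto; meson order_trans)
  obtain rx where rx: "reduced rx" "pres_eq (kis_rel n) x rx" using normalize assms(1) by blast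
  obtain ry where ry: "reduced ry" "pres_eq (kis_rel n) y ry" using normalize assms(2) by blast
  have "Dset rx = Dset ry" using Dset_pres rx ry \<open>Dset x = Dset y\<close> by metis
  then have "rx = ry" using Dset_unique rx ry by blast
  then show ?thesis using rx ry pe_tr pe_sym by metis
qed

lemma cat_kis: "identity_holds (cat_rel n) n w w' \<Longrightarrow> identity_holds (kis_rel n) n w w'"
proof -
  assume h: "identity_holds (cat_rel n) n w w'"
  have d: "\<And>s. length s \<le> n \<Longrightarrow> subseq s w \<longleftrightarrow> subseq s w'" using cat_detect[OF h] by blast
  show ?thesis unfolding identity_holds_def
  proof (intro allI impI)
    fix \<sigma> :: "'a \<Rightarrow> nat list"
    assume r: "\<forall>x. set (\<sigma> x) \<subseteq> {1..n}"
    show "pres_eq (kis_rel n) (concat (map \<sigma> w)) (concat (map \<sigma> w'))"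
    proof (rule kis_complete)
      show "set (concat (map \<sigma> w)) \<subseteq> {1..n}" "set (concat (map \<sigma> w')) \<subseteq> {1..n}"
        using r by auto
      fix s :: "nat list" assume "length s \<le> n"
      then show "subseq s (concat (map \<sigma> w)) \<longleftrightarrow> subseq s (concat (map \<sigma> w'))"
        using subst_sim[of n w w' s \<sigma>] subst_sim[of n w' w s \<sigma>] d by blast
    qed
  qed
qed

theorem theorem1:
  fixes n :: nat and w w' :: "'x list"
  assumes "n \<ge> 2"
  shows "(identity_holds (cat_rel n) n w w' \<longleftrightarrow> identity_holds (styl_rel n) n w w')
       \<and> (identity_holds (styl_rel n) n w w' \<longleftrightarrow> identity_holds (kis_rel n) n w w')"
proof -
  have ks: "identity_holds (kis_rel n) n w w' \<Longrightarrow> identity_holds (styl_rel n) n w w'"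
    by (rule identity_holds_mono[OF kis_styl])
  have sc: "identity_holds (styl_rel n) n w w' \<Longrightarrow> identity_holds (cat_rel n) n w w'"
    by (rule identity_holds_mono[OF styl_cat])
  show ?thesis using ks sc cat_kis by blast
qed

end
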